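(* Let $\mathcal S$ be a $2$-$(v,k,\lambda)$ design admitting a flag-transitive automorphism group $\Gamma$, with $v=k+1$ or $v=k+2$. Then one of the following holds: (1) $\mathcal S$ is the complete $2$-$(v,k,\lambda)$ design and $\Gamma$ acts $2$-transitively on points; (2) $k$ is odd and $\Gamma$ is a point-primitive group of rank $3$ with subdegrees $1,\frac{k+1}{2},\frac{k+1}{2}$.
   Context: A complete $2$-$(v,k,\lambda)$ design has all $k$-subsets as blocks. *)

theory Defs
  imports "HOL-Combinatorics.Permutations" "HOL-Library.Multiset"
begin

definition design2 :: "'a set \<Rightarrow> 'a set set \<Rightarrow> nat \<Rightarrow> nat \<Rightarrow> bool" where
  "design2 P Bs k lam \<longleftrightarrow> finite P \<and> (\<forall>B\<in>Bs. B \<subseteq> P \<and> card B = k)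
     \<and> (\<forall>x\<in>P. \<forall>y\<in>P. x \<noteq> y \<longrightarrow> card {B\<in>Bs. x \<in> B \<and> y \<in> B} = lam)
     \<and> 2 \<le> k \<and> k < card P \<and> 0 < lam"

definition complete_design :: "'a set \<Rightarrow> 'a set set \<Rightarrow> nat \<Rightarrow> bool" where
  "complete_design P Bs k \<longleftrightarrow> Bs = {B. B \<subseteq> P \<and> card B = k}"

definition perm_group_on :: "('a \<Rightarrow> 'a) set \<Rightarrow> 'a set \<Rightarrow> bool" where
  "perm_group_on G P \<longleftrightarrow> id \<in> G \<and> (\<forall>g\<in>G. g permutes P)
     \<and> (\<forall>g\<in>G. \<forall>h\<in>G. g \<circ> h \<in> G) \<and> (\<forall>g\<in>G. inv g \<in> G)"

definition automorphism_group :: "('a \<Rightarrow> 'a) set \<Rightarrow> 'a set \<Rightarrow> 'a set set \<Rightarrow> bool" where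
  "automorphism_group G P Bs \<longleftrightarrow> perm_group_on G P \<and> (\<forall>g\<in>G. \<forall>B\<in>Bs. g ` B \<in> Bs)"

definition flag_transitive :: "('a \<Rightarrow> 'a) set \<Rightarrow> 'a set \<Rightarrow> 'a set set \<Rightarrow> bool" where
  "flag_transitive G P Bs \<longleftrightarrow>
     (\<forall>x B y C. B \<in> Bs \<and> x \<in> B \<and> C \<in> Bs \<and> y \<in> C \<longrightarrow> (\<exists>g\<in>G. g x = y \<and> g ` B = C))"

definition transitive_on :: "('a \<Rightarrow> 'a) set \<Rightarrow> 'a set \<Rightarrow> bool" where
  "transitive_on G P \<longleftrightarrow> (\<forall>x\<in>P. \<forall>y\<in>P. \<exists>g\<in>G. g x = y)"

definition two_transitive_on :: "('a \<Rightarrow> 'a) set \<Rightarrow> 'a set \<Rightarrow> bool" where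
  "two_transitive_on G P \<longleftrightarrow> (\<forall>x\<in>P. \<forall>y\<in>P. \<forall>x'\<in>P. \<forall>y'\<in>P.
      x \<noteq> y \<longrightarrow> x' \<noteq> y' \<longrightarrow> (\<exists>g\<in>G. g x = x' \<and> g y = y'))"

definition primitive_on :: "('a \<Rightarrow> 'a) set \<Rightarrow> 'a set \<Rightarrow> bool" where
  "primitive_on G P \<longleftrightarrow> transitive_on G P \<and>
     (\<forall>D. D \<subseteq> P \<and> (\<forall>g\<in>G. g ` D = D \<or> g ` D \<inter> D = {}) \<longrightarrow> card D \<le> 1 \<or> D = P)"

definition orbital :: "('a \<Rightarrow> 'a) set \<Rightarrow> 'a \<times> 'a \<Rightarrow> ('a \<times> 'a) set" where
  "orbital G p = {(g (fst p), g (snd p)) | g. g \<in> G}"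

definition rank :: "('a \<Rightarrow> 'a) set \<Rightarrow> 'a set \<Rightarrow> nat" where
  "rank G P = card (orbital G ` (P \<times> P))"

definition suborbits :: "('a \<Rightarrow> 'a) set \<Rightarrow> 'a set \<Rightarrow> 'a \<Rightarrow> 'a set set" where
  "suborbits G P x = (\<lambda>y. {g y | g. g \<in> G \<and> g x = x}) ` P"

definition subdegrees :: "('a \<Rightarrow> 'a) set \<Rightarrow> 'a set \<Rightarrow> 'a \<Rightarrow> nat multiset" where
  "subdegrees G P x = image_mset card (mset_set (suborbits G P x))"

end

theory Submission
  imports Defs
begin

lemma pg_perm: "perm_group_on G P \<Longrightarrow> g \<in> G \<Longrightarrow> g permutes P"
  unfolding perm_group_on_def by blast
lemma pg_comp: "perm_group_on G P \<Longrightarrow> g \<in> G \<Longrightarrow> h \<in> G \<Longrightarrow> g \<circ> h \<in> G"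
  unfolding perm_group_on_def by blast
lemma pg_inv: "perm_group_on G P \<Longrightarrow> g \<in> G \<Longrightarrow> inv g \<in> G"
  unfolding perm_group_on_def by blast
lemma pg_id: "perm_group_on G P \<Longrightarrow> id \<in> G"
  unfolding perm_group_on_def by blast

lemma img_compl:
  assumes "g permutes P" "S \<subseteq> P" "T \<subseteq> P" "g ` (P - S) = P - T"
  shows "g ` S = T"
proof -
  have inj: "inj g" using assms(1) permutes_inj by blast
  have 1: "g ` (P - S) = g ` P - g ` S" by (rule image_set_diff[OF inj])
  have 2: "g ` P = P" by (rule permutes_image[OF assms(1)])
  have 3: "g ` S \<subseteq> P" using assms(2) 2 by (metis image_mono)
  have "P - g ` S = P - T" using 1 2 assms(4) by simp
  then have "P - (P - g ` S) = P - (P - T)" by simp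
  then show ?thesis using 3 assms(3) by (simp add: Diff_Diff_Int inf.absorb2)
qed

lemma swap_exists:
  assumes pg: "perm_group_on G P" and fin: "finite P" and v4: "card P \<ge> 4"
    and hom: "\<And>c a b c' a' b'. {a,b,c} \<subseteq> P \<Longrightarrow> {a',b',c'} \<subseteq> P \<Longrightarrow> distinct [a,b,c]
        \<Longrightarrow> distinct [a',b',c'] \<Longrightarrow> \<exists>g\<in>G. g c = c' \<and> g ` {a,b} = {a',b'}"
    and tr: "\<And>x y. x \<in> P \<Longrightarrow> y \<in> P \<Longrightarrow> \<exists>g\<in>G. g x = y"
    and ab: "a \<in> P" "b \<in> P" "a \<noteq> b"
  shows "\<exists>g\<in>G. g a = b \<and> g b = a"
proof (rule ccontr)
  assume ns: "\<not> (\<exists>g\<in>G. g a = b \<and> g b = a)"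
  define R where "R x y \<longleftrightarrow> (\<exists>g\<in>G. g a = x \<and> g b = y)" for x y
  have third: "\<exists>c\<in>P. c \<noteq> x \<and> c \<noteq> y" for x y
  proof -
    have "card (P - {x, y}) \<ge> card P - card {x,y}" by (rule diff_card_le_card_Diff) simp
    moreover have "card {x,y} \<le> 2" by (simp add: card_insert_le_m1)
    ultimately have "card (P - {x,y}) > 0" using v4 by linarith
    then obtain c where "c \<in> P - {x,y}" by (metis card.empty ex_in_conv less_irrefl)
    then show ?thesis by blast
  qed
  have third3: "\<exists>c\<in>P. c \<noteq> x \<and> c \<noteq> y \<and> c \<noteq> z" for x y z
  proof -
    have "card (P - {x, y, z}) \<ge> card P - card {x,y,z}" by (rule diff_card_le_card_Diff) simp
    moreover have "card {x,y,z} \<le> 3" by (simp add: card_insert_le_m1)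
    ultimately have "card (P - {x,y,z}) > 0" using v4 by linarith
    then obtain c where "c \<in> P - {x,y,z}" by (metis card.empty ex_in_conv less_irrefl)
    then show ?thesis by blast
  qed
  have Rab: "R a b" unfolding R_def using pg_id[OF pg] by (metis id_apply)
  have Rinv: "R (g x) (g y)" if "g \<in> G" "R x y" for g x y
    using that pg_comp[OF pg] unfolding R_def by (metis comp_apply)
  have Rnot: False if r1: "R x y" and r2: "R y x" for x y
  proof -
    obtain g where g: "g \<in> G" "g a = x" "g b = y" using r1 unfolding R_def by blast
    obtain h where h: "h \<in> G" "h a = y" "h b = x" using r2 unfolding R_def by blast
    have gp: "g permutes P" using pg_perm[OF pg g(1)] .
    have "inv g \<circ> h \<in> G" using pg_comp[OF pg pg_inv[OF pg g(1)] h(1)] .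
    moreover have "(inv g \<circ> h) a = b" using h g permutes_inverses(2)[OF gp] by (metis comp_apply)
    moreover have "(inv g \<circ> h) b = a" using h g permutes_inverses(2)[OF gp] by (metis comp_apply)
    ultimately show False using ns by blast
  qed
  have Rin: "x \<in> P \<and> y \<in> P \<and> x \<noteq> y" if r1: "R x y" for x y
  proof -
    obtain g where g: "g \<in> G" "g a = x" "g b = y" using r1 unfolding R_def by blast
    have gp: "g permutes P" using pg_perm[OF pg g(1)] .
    show ?thesis using g ab permutes_in_image[OF gp] permutes_inj[OF gp]
      by (metis injD)
  qed
  have Rtot: "R x y \<or> R y x" if xy: "x \<in> P" "y \<in> P" "x \<noteq> y" for x y
  proof -
    obtain c where c: "c \<in> P" "c \<noteq> a" "c \<noteq> b" using third by blast
    obtain c' where c': "c' \<in> P" "c' \<noteq> x" "c' \<noteq> y" using third by blast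
    obtain g where g: "g \<in> G" "g ` {a,b} = {x,y}"
      using hom[of a b c x y c'] c c' xy ab by auto
    have gp: "g permutes P" using pg_perm[OF pg g(1)] .
    have "g a \<noteq> g b" using ab permutes_inj[OF gp] by (metis injD)
    then have "(g a = x \<and> g b = y) \<or> (g a = y \<and> g b = x)" using g(2) by (auto simp: doubleton_eq_iff)
    then show ?thesis unfolding R_def using g(1) by blast
  qed
  have fixab: "\<exists>g\<in>G. g a = a \<and> g b = b \<and> g c = c'"
    if cc: "c \<in> P - {a,b}" "c' \<in> P - {a,b}" for c c'
  proof -
    obtain g where g: "g \<in> G" "g c = c'" "g ` {a,b} = {a,b}"
      using hom[of a b c a b c'] cc ab by auto
    have gp: "g permutes P" using pg_perm[OF pg g(1)] .
    have "g a \<noteq> g b" using ab permutes_inj[OF gp] by (metis injD)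
    then have "(g a = a \<and> g b = b) \<or> (g a = b \<and> g b = a)" using g(3) by (auto simp: doubleton_eq_iff)
    then show ?thesis using ns g by blast
  qed
  obtain c where c: "c \<in> P" "c \<noteq> a" "c \<noteq> b" using third by blast
  have Aa: "(\<forall>c'\<in>P-{a,b}. R a c') \<or> (\<forall>c'\<in>P-{a,b}. R c' a)"
  proof (cases "R a c")
    case True
    have "R a c'" if "c' \<in> P - {a,b}" for c'
      using fixab[of c c'] that c Rinv[OF _ True] by force
    then show ?thesis by blast
  next
    case False
    then have "R c a" using Rtot[of a c] c ab by blast
    have "R c' a" if "c' \<in> P - {a,b}" for c'
      using fixab[of c c'] that c Rinv[OF _ \<open>R c a\<close>] by force
    then show ?thesis by blast
  qed
  have Ab: "(\<forall>c'\<in>P-{a,b}. R b c') \<or> (\<forall>c'\<in>P-{a,b}. R c' b)"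
  proof (cases "R b c")
    case True
    have "R b c'" if "c' \<in> P - {a,b}" for c'
      using fixab[of c c'] that c Rinv[OF _ True] by force
    then show ?thesis by blast
  next
    case False
    then have "R c b" using Rtot[of b c] c ab by blast
    have "R c' b" if "c' \<in> P - {a,b}" for c'
      using fixab[of c c'] that c Rinv[OF _ \<open>R c b\<close>] by force
    then show ?thesis by blast
  qed
  obtain g0 where g0: "g0 \<in> G" "g0 a = b" using tr ab by blast
  have g0p: "g0 permutes P" using pg_perm[OF pg g0(1)] .
  show False
  proof (cases "\<forall>c'\<in>P-{a,b}. R a c'")
    case True
    define y where "y = inv g0 a"
    have y: "g0 y = a" unfolding y_def using permutes_inverses(1)[OF g0p] .
    have yP: "y \<in> P" using y ab permutes_in_image[OF g0p] by metis
    have "y \<noteq> a" using y g0 ab by auto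
    then have "R a y" using True Rab yP by (cases "y = b") auto
    then have "R b a" using Rinv[OF g0(1)] y g0 by metis
    then show False using Rnot Rab by blast
  next
    case False
    then have A2: "\<forall>c'\<in>P-{a,b}. R c' a" using Aa by blast
    show False
    proof (cases "\<forall>c'\<in>P-{a,b}. R b c'")
      case True
      obtain g1 where g1: "g1 \<in> G" "g1 b = a" using tr ab by blast
      have g1p: "g1 permutes P" using pg_perm[OF pg g1(1)] .
      have im: "g1 c' = b" if "c' \<in> P - {a,b}" for c'
      proof -
        have "R a (g1 c')" using Rinv[OF g1(1)] True that g1(2) by metis
        then have "g1 c' \<in> P" "g1 c' \<noteq> a" using Rin by auto
        moreover have "g1 c' \<notin> P - {a,b}" using A2 \<open>R a (g1 c')\<close> Rnot by blast
        ultimately show ?thesis by blast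
      qed
      obtain e where e: "e \<in> P" "e \<noteq> a" "e \<noteq> b" "e \<noteq> c" using third3 by blast
      have "g1 e = g1 c" using im[of e] im[of c] e c by auto
      then show False using e(4) permutes_inj[OF g1p] by (metis injD)
    next
      case False
      then have B2: "\<forall>c'\<in>P-{a,b}. R c' b" using Ab by blast
      have "R b (g0 b)" using Rinv[OF g0(1) Rab] g0 by simp
      then have "g0 b \<in> P" "g0 b \<noteq> b" using Rin[of b "g0 b"] by auto
      moreover have "g0 b \<noteq> a" using \<open>R b (g0 b)\<close> Rnot Rab by metis
      ultimately have "R (g0 b) b" using B2 by blast
      then show False using Rnot \<open>R b (g0 b)\<close> by blast
    qed
  qed
qed


lemma third_pt:
  assumes "finite P" "card P \<ge> 3"
  shows "\<exists>c\<in>P. c \<noteq> x \<and> c \<noteq> y"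
proof -
  have "card (P - {x, y}) \<ge> card P - card {x,y}" by (rule diff_card_le_card_Diff) simp
  moreover have "card {x,y} \<le> 2" by (simp add: card_insert_le_m1)
  ultimately have "card (P - {x,y}) > 0" using assms by linarith
  then obtain c where "c \<in> P - {x,y}" by (metis card.empty ex_in_conv less_irrefl)
  then show ?thesis by blast
qed

lemma compl1:
  assumes "finite P" "B \<subseteq> P" "card B + 1 = card P"
  shows "\<exists>z\<in>P. B = P - {z}"
proof -
  have fB: "finite B" using finite_subset assms(1,2) by blast
  have "card (P - B) = card P - card B" by (rule card_Diff_subset[OF fB assms(2)])
  then have "card (P - B) = Suc 0" using assms(3) by simp
  then obtain z where z: "P - B = {z}" using card_1_singleton_iff[of "P - B"] by blast
  have "B = P - (P - B)" using assms(2) by auto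
  then have "B = P - {z}" using z by simp
  moreover have "z \<in> P" using z by auto
  ultimately show ?thesis by blast
qed

lemma compl2:
  assumes "finite P" "B \<subseteq> P" "card B + 2 = card P"
  shows "\<exists>x\<in>P. \<exists>y\<in>P. x \<noteq> y \<and> B = P - {x,y}"
proof -
  have fB: "finite B" using finite_subset assms(1,2) by blast
  have "card (P - B) = card P - card B" by (rule card_Diff_subset[OF fB assms(2)])
  then have "card (P - B) = 2" using assms(3) by simp
  then obtain x y where z: "P - B = {x,y}" "x \<noteq> y" using card_2_iff[of "P - B"] by blast
  have "B = P - (P - B)" using assms(2) by auto
  then have "B = P - {x,y}" using z by simp
  moreover have "x \<in> P" "y \<in> P" using z by auto
  ultimately show ?thesis using z(2) by blast
qed

lemma card_minus2:
  assumes "finite P" "x \<in> P" "y \<in> P" "x \<noteq> y"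
  shows "card (P - {x,y}) + 2 = card P"
proof -
  have "card (P - {x,y}) = card P - card {x,y}" using assms by (intro card_Diff_subset) auto
  moreover have "card {x,y} = 2" using assms by simp
  moreover have "card {x,y} \<le> card P" using assms by (intro card_mono) auto
  ultimately show ?thesis by linarith
qed

lemma card_minus1:
  assumes "finite P" "x \<in> P"
  shows "card (P - {x}) + 1 = card P"
  using assms by (simp add: card_Diff_singleton) (metis Suc_pred card_gt_0_iff empty_iff)

theorem lemma5p2:
  fixes P :: "'a set" and Bs :: "'a set set" and G :: "('a \<Rightarrow> 'a) set"
    and k lam :: nat
  assumes "design2 P Bs k lam"
    and "automorphism_group G P Bs"
    and "flag_transitive G P Bs"
    and "card P = k + 1 \<or> card P = k + 2"
  shows "(complete_design P Bs k \<and> two_transitive_on G P)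
       \<or> (odd k \<and> primitive_on G P \<and> rank G P = 3
          \<and> (\<forall>x\<in>P. subdegrees G P x = {# 1, (k + 1) div 2, (k + 1) div 2 #}))"
proof -
  from assms(1) have fin: "finite P" and blk: "\<And>B. B \<in> Bs \<Longrightarrow> B \<subseteq> P \<and> card B = k"
    and pairs: "\<And>x y. x \<in> P \<Longrightarrow> y \<in> P \<Longrightarrow> x \<noteq> y \<Longrightarrow> card {B\<in>Bs. x \<in> B \<and> y \<in> B} = lam"
    and k2: "2 \<le> k" and kv: "k < card P" and lpos: "0 < lam"
    unfolding design2_def by auto
  from assms(2) have pg: "perm_group_on G P" and aut: "\<And>g B. g \<in> G \<Longrightarrow> B \<in> Bs \<Longrightarrow> g ` B \<in> Bs"
    unfolding automorphism_group_def by auto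
  have ft: "\<And>x B y C. B \<in> Bs \<Longrightarrow> x \<in> B \<Longrightarrow> C \<in> Bs \<Longrightarrow> y \<in> C \<Longrightarrow> \<exists>g\<in>G. g x = y \<and> g ` B = C"
    using assms(3) unfolding flag_transitive_def by blast
  have v3: "card P \<ge> 3" using k2 kv by linarith
  have gp: "\<And>g. g \<in> G \<Longrightarrow> g permutes P" using pg_perm[OF pg] .
  have inblk: "\<exists>B\<in>Bs. x \<in> B" if xP: "x \<in> P" for x
  proof -
    obtain y where y: "y \<in> P" "y \<noteq> x" using third_pt[OF fin v3, of x x] by blast
    have "card {B\<in>Bs. x \<in> B \<and> y \<in> B} > 0" using pairs[of x y] xP y lpos by simp
    then obtain B where "B \<in> {B\<in>Bs. x \<in> B \<and> y \<in> B}" by (metis card.empty ex_in_conv less_irrefl)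
    then show ?thesis by blast
  qed
  have tr: "\<exists>g\<in>G. g x = y" if xyP: "x \<in> P" "y \<in> P" for x y
  proof -
    obtain B where B: "B \<in> Bs" "x \<in> B" using inblk xyP(1) by blast
    obtain C where C: "C \<in> Bs" "y \<in> C" using inblk xyP(2) by blast
    obtain g where "g \<in> G" "g x = y" using ft[OF B C] by blast
    then show ?thesis by blast
  qed
  have finBs: "finite Bs"
  proof -
    have "Bs \<subseteq> Pow P" using blk by blast
    then show ?thesis by (rule finite_subset) (simp add: fin)
  qed
  obtain p0 where p0: "p0 \<in> P" using third_pt[OF fin v3, of p0 p0] by blast
  obtain B0 where B0: "B0 \<in> Bs" using inblk[OF p0] by blast
  have main: "complete_design P Bs k \<and> two_transitive_on G P"
    using assms(4)
  proof
    assume vk: "card P = k + 1"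
    have allb: "P - {z} \<in> Bs" if zP: "z \<in> P" for z
    proof -
      obtain z0 where z0: "z0 \<in> P" "B0 = P - {z0}" using compl1[OF fin, of B0] blk[OF B0] vk by auto
      obtain g where g: "g \<in> G" "g z0 = z" using tr z0(1) zP by blast
      have "g ` B0 = g ` P - g ` {z0}" using z0(2) image_set_diff[OF permutes_inj[OF gp[OF g(1)]]] by simp
      also have "\<dots> = P - {z}" using permutes_image[OF gp[OF g(1)]] g(2) by simp
      finally show ?thesis using aut[OF g(1) B0] by simp
    qed
    have cd: "complete_design P Bs k"
      unfolding complete_design_def
    proof (rule equalityI)
      show "Bs \<subseteq> {B. B \<subseteq> P \<and> card B = k}" using blk by blast
      show "{B. B \<subseteq> P \<and> card B = k} \<subseteq> Bs"
      proof
        fix B assume "B \<in> {B. B \<subseteq> P \<and> card B = k}"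
        then have "B \<subseteq> P" "card B = k" by auto
        then obtain z where "z \<in> P" "B = P - {z}" using compl1[OF fin, of B] vk by auto
        then show "B \<in> Bs" using allb by simp
      qed
    qed
    have tt: "two_transitive_on G P"
      unfolding two_transitive_on_def
    proof (intro ballI impI)
      fix x y x' y' assume h: "x \<in> P" "y \<in> P" "x' \<in> P" "y' \<in> P" "x \<noteq> y" "x' \<noteq> y'"
      obtain g where g: "g \<in> G" "g x = x'" "g ` (P - {y}) = P - {y'}"
        using ft[OF allb[OF h(2)] _ allb[OF h(4)], of x x'] h by blast
      have "g ` {y} = {y'}" using img_compl[OF gp[OF g(1)] _ _ g(3)] h by blast
      then show "\<exists>g\<in>G. g x = x' \<and> g y = y'" using g by auto
    qed
    show ?thesis using cd tt by blast
  next
    assume vk: "card P = k + 2"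
    define D where "D y = {B\<in>Bs. y \<notin> B}" for y
    have finD: "finite (D y)" for y unfolding D_def using finBs by simp
    have Dle: "card (D y) \<le> card (D y')" if yy: "y \<in> P" "y' \<in> P" for y y'
    proof -
      obtain g where g: "g \<in> G" "g y = y'" using tr yy by blast
      have inj: "inj g" using permutes_inj[OF gp[OF g(1)]] .
      show ?thesis
      proof (rule card_inj_on_le[OF _ _ finD])
        show "inj_on ((`) g) (D y)" using inj by (simp add: inj_on_def inj_image_eq_iff)
        show "(`) g ` D y \<subseteq> D y'"
        proof
          fix C assume "C \<in> (`) g ` D y"
          then obtain B where B: "B \<in> Bs" "y \<notin> B" "C = g ` B" unfolding D_def by blast
          have "y' \<notin> C" using B g(2) inj by (metis inj_image_mem_iff)
          then show "C \<in> D y'" unfolding D_def using aut[OF g(1) B(1)] B(3) by simp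
        qed
      qed
    qed
    obtain x0 where x0: "x0 \<in> P" using p0 by blast
    define d where "d = card (D x0)"
    have Dd: "card (D y) = d" if "y \<in> P" for y using Dle[OF that x0] Dle[OF x0 that] d_def by simp
    have cnt: "card Bs = lam + card (D x \<union> D y) \<and> card (D x \<union> D y) + card (D x \<inter> D y) = 2 * d"
      if xy: "x \<in> P" "y \<in> P" "x \<noteq> y" for x y
    proof
      have e1: "{B\<in>Bs. x \<in> B \<and> y \<in> B} = Bs - (D x \<union> D y)" unfolding D_def by blast
      have "D x \<union> D y \<subseteq> Bs" unfolding D_def by blast
      have "card (Bs - (D x \<union> D y)) = card Bs - card (D x \<union> D y)"
        by (rule card_Diff_subset[OF finite_subset[OF \<open>D x \<union> D y \<subseteq> Bs\<close> finBs] \<open>D x \<union> D y \<subseteq> Bs\<close>])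
      then have "card {B\<in>Bs. x \<in> B \<and> y \<in> B} = card Bs - card (D x \<union> D y)" using e1 by simp
      moreover have "card (D x \<union> D y) \<le> card Bs" using \<open>D x \<union> D y \<subseteq> Bs\<close> finBs card_mono by blast
      ultimately show "card Bs = lam + card (D x \<union> D y)" using pairs[OF xy] by linarith
      show "card (D x \<union> D y) + card (D x \<inter> D y) = 2 * d"
        using card_Un_Int[OF finD finD, of x y] Dd xy by simp
    qed
    have inter: "D x \<inter> D y \<subseteq> {P - {x,y}}" if xy: "x \<in> P" "y \<in> P" "x \<noteq> y" for x y
    proof
      fix B assume "B \<in> D x \<inter> D y"
      then have B: "B \<in> Bs" "x \<notin> B" "y \<notin> B" unfolding D_def by auto
      have "B \<subseteq> P - {x,y}" using B blk by blast
      moreover have "card B = card (P - {x,y})" using card_minus2[OF fin xy] blk[OF B(1)] vk by simp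
      ultimately have "B = P - {x,y}" using card_subset_eq[of "P - {x,y}" B] fin by blast
      then show "B \<in> {P - {x,y}}" by simp
    qed
    have allb: "P - {x,y} \<in> Bs" if xy: "x \<in> P" "y \<in> P" "x \<noteq> y" for x y
    proof (rule ccontr)
      assume nb: "P - {x,y} \<notin> Bs"
      have e0: "D x \<inter> D y = {}" using inter[OF xy] nb unfolding D_def by blast
      obtain x1 y1 where b1: "x1 \<in> P" "y1 \<in> P" "x1 \<noteq> y1" "B0 = P - {x1,y1}"
        using compl2[OF fin, of B0] blk[OF B0] vk by auto
      have "B0 \<in> D x1 \<inter> D y1" unfolding D_def using B0 b1 by blast
      then have "D x1 \<inter> D y1 = {B0}" using inter[OF b1(1-3)] b1(4) by blast
      then have "card (D x1 \<inter> D y1) = 1" by simp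
      then show False using cnt[OF xy] cnt[OF b1(1-3)] e0 by simp
    qed
    have cd: "complete_design P Bs k"
      unfolding complete_design_def
    proof (rule equalityI)
      show "Bs \<subseteq> {B. B \<subseteq> P \<and> card B = k}" using blk by blast
      show "{B. B \<subseteq> P \<and> card B = k} \<subseteq> Bs"
      proof
        fix B assume "B \<in> {B. B \<subseteq> P \<and> card B = k}"
        then have "B \<subseteq> P" "card B = k" by auto
        then obtain x y where "x \<in> P" "y \<in> P" "x \<noteq> y" "B = P - {x,y}" using compl2[OF fin, of B] vk by auto
        then show "B \<in> Bs" using allb by simp
      qed
    qed
    have v4: "card P \<ge> 4" using vk k2 by linarith
    have hom: "\<exists>g\<in>G. g c = c' \<and> g ` {a,b} = {a',b'}"
      if hh: "{a,b,c} \<subseteq> P" "{a',b',c'} \<subseteq> P" "distinct [a,b,c]" "distinct [a',b',c']" for a b c a' b' c'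
    proof -
      have ab: "P - {a,b} \<in> Bs" "c \<in> P - {a,b}" using hh allb by auto
      have ab': "P - {a',b'} \<in> Bs" "c' \<in> P - {a',b'}" using hh allb by auto
      obtain g where g: "g \<in> G" "g c = c'" "g ` (P - {a,b}) = P - {a',b'}"
        using ft[OF ab(1) ab(2) ab'(1) ab'(2)] by blast
      have "g ` {a,b} = {a',b'}" using img_compl[OF gp[OF g(1)] _ _ g(3)] hh by blast
      then show ?thesis using g by blast
    qed
    have sw: "\<exists>g\<in>G. g a = b \<and> g b = a" if ab: "a \<in> P" "b \<in> P" "a \<noteq> b" for a b
      using swap_exists[OF pg fin v4 hom tr ab] by blast
    have tt: "two_transitive_on G P"
      unfolding two_transitive_on_def
    proof (intro ballI impI)
      fix x y x' y' assume h: "x \<in> P" "y \<in> P" "x' \<in> P" "y' \<in> P" "x \<noteq> y" "x' \<noteq> y'"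
      obtain c where c: "c \<in> P" "c \<noteq> x" "c \<noteq> y" using third_pt[OF fin v3] by blast
      obtain c' where c': "c' \<in> P" "c' \<noteq> x'" "c' \<noteq> y'" using third_pt[OF fin v3] by blast
      obtain g where g: "g \<in> G" "g ` {x,y} = {x',y'}" using hom[of x y c x' y' c'] h c c' by auto
      have "g x \<noteq> g y" using h permutes_inj[OF gp[OF g(1)]] by (metis injD)
      then have "(g x = x' \<and> g y = y') \<or> (g x = y' \<and> g y = x')" using g(2) by (auto simp: doubleton_eq_iff)
      then show "\<exists>g\<in>G. g x = x' \<and> g y = y'"
      proof
        assume "g x = x' \<and> g y = y'" then show ?thesis using g(1) by blast
      next
        assume a: "g x = y' \<and> g y = x'"
        obtain h where hh: "h \<in> G" "h x' = y'" "h y' = x'" using sw[of x' y'] h by blast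
        have "h \<circ> g \<in> G" using pg_comp[OF pg hh(1) g(1)] .
        moreover have "(h \<circ> g) x = x' \<and> (h \<circ> g) y = y'" using a hh by simp
        ultimately show ?thesis by blast
      qed
    qed
    show ?thesis using cd tt by blast
  qed
  then show ?thesis by blast
qed

end
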